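(* Let $(\mathfrak g,\mathfrak g_1,\mathfrak g_2)$ be a quasi-double Lie algebra with maps $\psi,\mu$, and for $x\in\mathfrak g_2$, $\xi\in\mathfrak g_1$ let $x^\xi\in\mathfrak g_2$ denote the $\mathfrak g_2$-component of $[x,\xi]_{\mathfrak g}$ in the decomposition $\mathfrak g=\mathfrak g_1\oplus\mathfrak g_2$. Define $[x,y]_{\mathfrak g_2}=\mu(x,y)$ and $\langle x,y,z\rangle=\frac12\,x^{\psi(y,z)}$ for $x,y,z\in\mathfrak g_2$. Then $(\mathfrak g_2,[\cdot,\cdot]_{\mathfrak g_2},\langle\cdot,\cdot,\cdot\rangle)$ is an Akivis algebra.
   Context: A quasi-double Lie algebra is a triple $(\mathfrak g,\mathfrak g_1,\mathfrak g_2)$ where $\mathfrak g$ is a Lie algebra, $\mathfrak g_1$ a Lie subalgebra, and $\mathfrak g_2$ a linear subspace equipped with antisymmetric bilinear maps $\psi:\Lambda^2\mathfrak g_2\to\mathfrak g_1$, $\mu:\Lambda^2\mathfrak g_2\to\mathfrak g_2$ such that $\mathfrak g=\mathfrak g_1\oplus\mathfrak g_2$ as vector spaces and $[x,y]_{\mathfrak g}=\psi(x,y)+\mu(x,y)$ for all $x,y\in\mathfrak g_2$. An Akivis algebra $(A,[\cdot,\cdot],\langle\cdot,\cdot,\cdot\rangle)$ is a vector space $A$ with an antisymmetric bilinear map $[\cdot,\cdot]:A\times A\to A$ and a trilinear map $\langle\cdot,\cdot,\cdot\rangle:A\times A\times A\to A$ such that $\sum_{\sigma\in S_3}\mathrm{sign}(\sigma)\langle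 x_{\sigma(1)},x_{\sigma(2)},x_{\sigma(3)}\rangle=\sum_{\circlearrowleft}[[x_1,x_2],x_3]$ for all $x_1,x_2,x_3\in A$, the right side being the sum over cyclic permutations of $(x_1,x_2,x_3)$. *)

theory Defs
  imports Complex_Main
begin

text \<open>All structures live in an ambient vector space over a field 'k, given by a
scalar multiplication scale :: 'k => 'v => 'v (library locale vector_space).\<close>

definition bilinear_on :: "('k::field \<Rightarrow> 'v::ab_group_add \<Rightarrow> 'v) \<Rightarrow> 'v set \<Rightarrow> ('v \<Rightarrow> 'v \<Rightarrow> 'v) \<Rightarrow> bool" where
  "bilinear_on scale A f \<longleftrightarrow>
     (\<forall>x\<in>A. \<forall>y\<in>A. \<forall>z\<in>A. \<forall>c.
        f (x + y) z = f x z + f y z \<and> f x (y + z) = f x y + f x z \<and>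
        f (scale c x) y = scale c (f x y) \<and> f x (scale c y) = scale c (f x y))"

definition trilinear_on :: "('k::field \<Rightarrow> 'v::ab_group_add \<Rightarrow> 'v) \<Rightarrow> 'v set \<Rightarrow> ('v \<Rightarrow> 'v \<Rightarrow> 'v \<Rightarrow> 'v) \<Rightarrow> bool" where
  "trilinear_on scale A t \<longleftrightarrow>
     (\<forall>x\<in>A. \<forall>y\<in>A. \<forall>z\<in>A. \<forall>w\<in>A. \<forall>c.
        t (x + w) y z = t x y z + t w y z \<and>
        t x (y + w) z = t x y z + t x w z \<and>
        t x y (z + w) = t x y z + t x y w \<and>
        t (scale c x) y z = scale c (t x y z) \<and>
        t x (scale c y) z = scale c (t x y z) \<and>
        t x y (scale c z) = scale c (t x y z))"

definition antisymmetric_on :: "'v set \<Rightarrow> ('v \<Rightarrow> 'v \<Rightarrow> 'v::ab_group_add) \<Rightarrow> bool" where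
  "antisymmetric_on A f \<longleftrightarrow> (\<forall>x\<in>A. \<forall>y\<in>A. f x y = - f y x)"

definition lie_algebra :: "('k::field \<Rightarrow> 'v::ab_group_add \<Rightarrow> 'v) \<Rightarrow> ('v \<Rightarrow> 'v \<Rightarrow> 'v) \<Rightarrow> bool" where
  "lie_algebra scale br \<longleftrightarrow>
     vector_space scale \<and> bilinear_on scale UNIV br \<and> (\<forall>x. br x x = 0) \<and>
     (\<forall>x y z. br x (br y z) + br y (br z x) + br z (br x y) = 0)"

text \<open>Quasi-double Lie algebra (g, g1, g2) with maps psi, mu; g is the ambient space.\<close>
definition quasi_double_lie_algebra ::
  "('k::field \<Rightarrow> 'v::ab_group_add \<Rightarrow> 'v) \<Rightarrow> ('v \<Rightarrow> 'v \<Rightarrow> 'v) \<Rightarrow> 'v set \<Rightarrow> 'v set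
    \<Rightarrow> ('v \<Rightarrow> 'v \<Rightarrow> 'v) \<Rightarrow> ('v \<Rightarrow> 'v \<Rightarrow> 'v) \<Rightarrow> bool" where
  "quasi_double_lie_algebra scale br g1 g2 \<psi> \<mu> \<longleftrightarrow>
     lie_algebra scale br \<and>
     module.subspace scale g1 \<and> (\<forall>x\<in>g1. \<forall>y\<in>g1. br x y \<in> g1) \<and>
     module.subspace scale g2 \<and>
     g1 \<inter> g2 = {0} \<and> (\<forall>v. \<exists>a\<in>g1. \<exists>b\<in>g2. v = a + b) \<and>
     bilinear_on scale g2 \<psi> \<and> antisymmetric_on g2 \<psi> \<and> (\<forall>x\<in>g2. \<forall>y\<in>g2. \<psi> x y \<in> g1) \<and>
     bilinear_on scale g2 \<mu> \<and> antisymmetric_on g2 \<mu> \<and> (\<forall>x\<in>g2. \<forall>y\<in>g2. \<mu> x y \<in> g2) \<and>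
     (\<forall>x\<in>g2. \<forall>y\<in>g2. br x y = \<psi> x y + \<mu> x y)"

definition proj2 :: "'v set \<Rightarrow> 'v set \<Rightarrow> 'v::ab_group_add \<Rightarrow> 'v" where
  "proj2 g1 g2 v = (THE b. b \<in> g2 \<and> v - b \<in> g1)"

definition akivis_algebra ::
  "('k::field \<Rightarrow> 'v::ab_group_add \<Rightarrow> 'v) \<Rightarrow> 'v set \<Rightarrow> ('v \<Rightarrow> 'v \<Rightarrow> 'v) \<Rightarrow> ('v \<Rightarrow> 'v \<Rightarrow> 'v \<Rightarrow> 'v) \<Rightarrow> bool" where
  "akivis_algebra scale A brk tri \<longleftrightarrow>
     module.subspace scale A \<and>
     (\<forall>x\<in>A. \<forall>y\<in>A. brk x y \<in> A) \<and> bilinear_on scale A brk \<and> antisymmetric_on A brk \<and>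
     (\<forall>x\<in>A. \<forall>y\<in>A. \<forall>z\<in>A. tri x y z \<in> A) \<and> trilinear_on scale A tri \<and>
     (\<forall>x1\<in>A. \<forall>x2\<in>A. \<forall>x3\<in>A.
        tri x1 x2 x3 - tri x1 x3 x2 - tri x2 x1 x3 + tri x2 x3 x1 + tri x3 x1 x2 - tri x3 x2 x1
        = brk (brk x1 x2) x3 + brk (brk x2 x3) x1 + brk (brk x3 x1) x2)"

end

theory Submission
  imports Defs
begin

lemma add_hom_neg:
  fixes f :: "'v::ab_group_add \<Rightarrow> 'w::ab_group_add"
  assumes "\<And>a b. a \<in> A \<Longrightarrow> b \<in> A \<Longrightarrow> f (a + b) = f a + f b"
    and "x \<in> A" and "0 \<in> A" and "- x \<in> A"
  shows "f (- x) = - f x"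
proof -
  have "f 0 = f 0 + f 0" using assms(1)[of 0 0] assms(3) by simp
  hence f0: "f 0 = 0" by simp
  have "f (x + - x) = f x + f (- x)" using assms by blast
  thus ?thesis using f0 by (simp add: add_eq_0_iff2)
qed

theorem mainTheorem4:
  fixes scale :: "'k::field \<Rightarrow> 'v::ab_group_add \<Rightarrow> 'v"
    and br :: "'v \<Rightarrow> 'v \<Rightarrow> 'v"
    and g1 g2 :: "'v set"
    and \<psi> \<mu> :: "'v \<Rightarrow> 'v \<Rightarrow> 'v"
  assumes "quasi_double_lie_algebra scale br g1 g2 \<psi> \<mu>"
    and "(2::'k) \<noteq> 0"
  shows "akivis_algebra scale g2 \<mu>
           (\<lambda>x y z. scale (1/2) (proj2 g1 g2 (br x (\<psi> y z))))"
proof -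
  note A = assms(1)[unfolded quasi_double_lie_algebra_def lie_algebra_def]
  interpret vector_space scale using A by blast
  have s1: "subspace g1" and s2: "subspace g2" and g12: "g1 \<inter> g2 = {0}"
    and dec: "\<And>v. \<exists>a\<in>g1. \<exists>b\<in>g2. v = a + b"
    and brb: "bilinear_on scale UNIV br"
    and jac: "\<And>x y z. br x (br y z) + br y (br z x) + br z (br x y) = 0"
    and psib: "bilinear_on scale g2 \<psi>" and psia: "antisymmetric_on g2 \<psi>"
    and psi1: "\<And>x y. x \<in> g2 \<Longrightarrow> y \<in> g2 \<Longrightarrow> \<psi> x y \<in> g1"
    and mub: "bilinear_on scale g2 \<mu>" and mua: "antisymmetric_on g2 \<mu>"
    and mu2: "\<And>x y. x \<in> g2 \<Longrightarrow> y \<in> g2 \<Longrightarrow> \<mu> x y \<in> g2"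
    and brd: "\<And>x y. x \<in> g2 \<Longrightarrow> y \<in> g2 \<Longrightarrow> br x y = \<psi> x y + \<mu> x y"
    using A by auto
  define P where "P = proj2 g1 g2"
  have char: "P v = b" if "b \<in> g2" "v - b \<in> g1" for v b
  proof -
    have "\<And>b'. b' \<in> g2 \<and> v - b' \<in> g1 \<Longrightarrow> b' = b"
    proof -
      fix b' assume h: "b' \<in> g2 \<and> v - b' \<in> g1"
      have "(v - b') - (v - b) \<in> g1" using h that subspace_diff[OF s1] by blast
      moreover have "(v - b') - (v - b) = b - b'" by simp
      moreover have "b - b' \<in> g2" using h that subspace_diff[OF s2] by blast
      ultimately have "b - b' \<in> g1 \<inter> g2" by simp
      hence "b - b' = 0" using g12 by simp
      thus "b' = b" by simp
    qed
    hence u: "\<And>b'. b' \<in> g2 \<and> v - b' \<in> g1 \<Longrightarrow> b' = b" .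
    show ?thesis unfolding P_def proj2_def
      by (rule the_equality[where a=b]) (use that u in blast)+
  qed
  have Pin: "P v \<in> g2 \<and> v - P v \<in> g1" for v
  proof -
    obtain a b where "a \<in> g1" "b \<in> g2" "v = a + b" using dec by blast
    hence "P v = b" using char by simp
    thus ?thesis using \<open>a \<in> g1\<close> \<open>b \<in> g2\<close> \<open>v = a + b\<close> by simp
  qed
  have Padd: "P (u + v) = P u + P v" for u v
  proof (rule char)
    show "P u + P v \<in> g2" using Pin subspace_add[OF s2] by blast
    have "u + v - (P u + P v) = (u - P u) + (v - P v)" by simp
    thus "u + v - (P u + P v) \<in> g1" using Pin subspace_add[OF s1] by metis
  qed
  have Pscale: "P (scale c v) = scale c (P v)" for c v
  proof (rule char)
    show "scale c (P v) \<in> g2" using Pin subspace_scale[OF s2] by blast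
    have "scale c v - scale c (P v) = scale c (v - P v)" by (simp add: scale_right_diff_distrib)
    thus "scale c v - scale c (P v) \<in> g1" using Pin subspace_scale[OF s1] by metis
  qed
  have Pneg: "P (- v) = - P v" for v
    by (rule add_hom_neg[where A=UNIV]) (auto simp: Padd)
  have Pg1: "P a = 0" if "a \<in> g1" for a using char[of 0 a] that subspace_0[OF s2] by simp
  have Pg2: "P b = b" if "b \<in> g2" for b using char[of b b] that subspace_0[OF s1] by simp
  have bradd1: "br (x + y) z = br x z + br y z" and bradd2: "br x (y + z) = br x y + br x z"
    and brs1: "br (scale c x) y = scale c (br x y)" and brs2: "br x (scale c y) = scale c (br x y)"
    for x y z c using brb unfolding bilinear_on_def by auto
  have brneg: "br x (- y) = - br x y" for x y
    by (rule add_hom_neg[where A=UNIV]) (auto simp: bradd2)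
  have psiadd1: "\<psi> (x + y) z = \<psi> x z + \<psi> y z" and psiadd2: "\<psi> x (y + z) = \<psi> x y + \<psi> x z"
    and psis1: "\<psi> (scale c x) y = scale c (\<psi> x y)" and psis2: "\<psi> x (scale c y) = scale c (\<psi> x y)"
    if "x \<in> g2" "y \<in> g2" "z \<in> g2" for x y z c using psib that unfolding bilinear_on_def by auto
  have psisym: "\<psi> x y = - \<psi> y x" if "x \<in> g2" "y \<in> g2" for x y
    using psia that unfolding antisymmetric_on_def by blast
  have musym: "\<mu> x y = - \<mu> y x" if "x \<in> g2" "y \<in> g2" for x y
    using mua that unfolding antisymmetric_on_def by blast
  define t where "t = (\<lambda>x y z. scale (1/2) (P (br x (\<psi> y z))))"
  have half: "scale (1/2) u + scale (1/2) u = u" for u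
  proof -
    have "(1/2::'k) + 1/2 = 1" using assms(2) by (simp add: field_simps)
    thus ?thesis by (metis scale_left_distrib scale_one)
  qed
  have tdiff: "t x y z - t x z y = P (br x (\<psi> y z))" if "y \<in> g2" "z \<in> g2" for x y z
    unfolding t_def using psisym[OF that(2,1)] by (simp add: brneg Pneg half)
  have tin: "t x y z \<in> g2" for x y z unfolding t_def using Pin subspace_scale[OF s2] by blast
  have brmu: "P (br x (\<mu> y z)) = \<mu> x (\<mu> y z)" if "x \<in> g2" "y \<in> g2" "z \<in> g2" for x y z
  proof -
    have m: "\<mu> y z \<in> g2" using mu2 that by blast
    have "P (br x (\<mu> y z)) = P (\<psi> x (\<mu> y z)) + P (\<mu> x (\<mu> y z))"
      using brd[OF that(1) m] Padd by simp
    also have "\<dots> = \<mu> x (\<mu> y z)" using Pg1[OF psi1[OF that(1) m]] Pg2[OF mu2[OF that(1) m]] by simp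
    finally show ?thesis .
  qed
  have key: "P (br x (\<psi> y z)) + P (br y (\<psi> z x)) + P (br z (\<psi> x y))
     = \<mu> (\<mu> x y) z + \<mu> (\<mu> y z) x + \<mu> (\<mu> z x) y"
    if "x \<in> g2" "y \<in> g2" "z \<in> g2" for x y z
  proof -
    have "P (br x (br y z) + br y (br z x) + br z (br x y)) = 0" using jac by (simp add: Pg1 subspace_0[OF s1])
    hence "P (br x (\<psi> y z)) + P (br y (\<psi> z x)) + P (br z (\<psi> x y))
       + (\<mu> x (\<mu> y z) + \<mu> y (\<mu> z x) + \<mu> z (\<mu> x y)) = 0"
      using that by (simp add: brd bradd2 Padd brmu algebra_simps)
    moreover have "\<mu> x (\<mu> y z) = - \<mu> (\<mu> y z) x" "\<mu> y (\<mu> z x) = - \<mu> (\<mu> z x) y"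
      "\<mu> z (\<mu> x y) = - \<mu> (\<mu> x y) z" using musym mu2 that by blast+
    ultimately show ?thesis by (simp add: algebra_simps eq_neg_iff_add_eq_0[symmetric])
  qed
  have tlin: "trilinear_on scale g2 t"
    unfolding trilinear_on_def t_def
    by (auto simp: psiadd1 psiadd2 psis1 psis2 bradd1 bradd2 brs1 brs2 Padd Pscale
        scale_right_distrib scale_scale mult.commute)
  show ?thesis
    unfolding akivis_algebra_def t_def[symmetric] P_def[symmetric]
  proof (intro conjI ballI)
    show "subspace g2" by (rule s2)
    show "trilinear_on scale g2 t" by (rule tlin)
    show "bilinear_on scale g2 \<mu>" by (rule mub)
    show "antisymmetric_on g2 \<mu>" by (rule mua)
  next
    fix x y assume "x \<in> g2" "y \<in> g2" thus "\<mu> x y \<in> g2" by (rule mu2)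
  next
    fix x y z show "t x y z \<in> g2" by (rule tin)
  next
    fix x1 x2 x3 assume h: "x1 \<in> g2" "x2 \<in> g2" "x3 \<in> g2"
    have "t x1 x2 x3 - t x1 x3 x2 - t x2 x1 x3 + t x2 x3 x1 + t x3 x1 x2 - t x3 x2 x1
       = (t x1 x2 x3 - t x1 x3 x2) + (t x2 x3 x1 - t x2 x1 x3) + (t x3 x1 x2 - t x3 x2 x1)"
      by (simp add: algebra_simps)
    also have "\<dots> = P (br x1 (\<psi> x2 x3)) + P (br x2 (\<psi> x3 x1)) + P (br x3 (\<psi> x1 x2))"
      using h by (simp add: tdiff)
    also have "\<dots> = \<mu> (\<mu> x1 x2) x3 + \<mu> (\<mu> x2 x3) x1 + \<mu> (\<mu> x3 x1) x2" using key h by blast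
    finally show "t x1 x2 x3 - t x1 x3 x2 - t x2 x1 x3 + t x2 x3 x1 + t x3 x1 x2 - t x3 x2 x1
       = \<mu> (\<mu> x1 x2) x3 + \<mu> (\<mu> x2 x3) x1 + \<mu> (\<mu> x3 x1) x2" .
  qed
qed

end
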